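(* Let $\lambda$ be a nonzero real number and let $n,r$ be positive integers. Then $$\sum_{k=1}^{n}(-1)^{k}H_{k,\lambda}^{(r)}\,k!\,S_{2,\lambda}(n,k)=(-1)^{n}\langle r\rangle_{n-1,\lambda}\,n.$$ In particular, for $r=1$ (provided $\langle 1\rangle_{n-1,\lambda}\neq 0$), $$\frac{1}{\langle 1\rangle_{n-1,\lambda}}\sum_{k=1}^{n}(-1)^{n-k}H_{k,\lambda}\,k!\,S_{2,\lambda}(n,k)=n.$$
   Context: For real $x$ and integer $k\ge0$: $(x)_{0,\lambda}=1$, $(x)_{k,\lambda}=x(x-\lambda)\cdots(x-(k-1)\lambda)$; $\langle x\rangle_{0,\lambda}=1$, $\langle x\rangle_{k,\lambda}=x(x+\lambda)\cdots(x+(k-1)\lambda)$; $(x)_0=1$, $(x)_k=x(x-1)\cdots(x-k+1)$. The degenerate Stirling numbers of the second kind $S_{2,\lambda}(n,k)$ are defined by $(x)_{n,\lambda}=\sum_{k=0}^{n}S_{2,\lambda}(n,k)(x)_{k}$ for $n\ge0$; equivalently $\frac{1}{k!}(e_\lambda(t)-1)^k=\sum_{n\ge k}S_{2,\lambda}(n,k)\frac{t^n}{n!}$, where $e_\lambda(t)=\sum_{k\ge0}(1)_{k,\lambda}t^k/k!=(1+\lambda t)^{1/\lambda}$. The degenerate harmonic numbers are $H_{0,\lambda}=0$, $H_{n,\lambda}=\sum_{k=1}^{n}\frac{1}{\lambda}\binom{\lambda}{k}(-1)^{k-1}$ for $n\ge1$; the degenerate hyperharmonic numbers are $H_{n,\lambda}^{(1)}=H_{n,\lambda}$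 and $H_{n,\lambda}^{(r)}=\sum_{k=1}^{n}H_{k,\lambda}^{(r-1)}$ for $r\ge2$. *)

theory Defs
  imports Complex_Main
begin

definition deg_fall :: "real \<Rightarrow> real \<Rightarrow> nat \<Rightarrow> real" where
  "deg_fall lam x k = (\<Prod>i<k. x - real i * lam)"

definition deg_rise :: "real \<Rightarrow> real \<Rightarrow> nat \<Rightarrow> real" where
  "deg_rise lam x k = (\<Prod>i<k. x + real i * lam)"

definition fall :: "real \<Rightarrow> nat \<Rightarrow> real" where
  "fall x k = (\<Prod>i<k. x - real i)"

definition deg_stirling2 :: "real \<Rightarrow> nat \<Rightarrow> nat \<Rightarrow> real" where
  "deg_stirling2 lam n = (THE c. (\<forall>k>n. c k = 0) \<and>
      (\<forall>x. deg_fall lam x n = (\<Sum>k\<le>n. c k * fall x k)))"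

definition deg_harm :: "real \<Rightarrow> nat \<Rightarrow> real" where
  "deg_harm lam n = (\<Sum>k=1..n. (1 / lam) * (lam gchoose k) * (-1) ^ (k - 1))"

text \<open>Degenerate hyperharmonic numbers H^{(r)}_{n,lambda} for r \<ge> 1
  (the value for r = 0 is an irrelevant convention).\<close>
fun deg_hyperharm :: "real \<Rightarrow> nat \<Rightarrow> nat \<Rightarrow> real" where
  "deg_hyperharm lam 0 n = 0"
| "deg_hyperharm lam (Suc 0) n = deg_harm lam n"
| "deg_hyperharm lam (Suc (Suc r)) n = (\<Sum>k=1..n. deg_hyperharm lam (Suc r) k)"

end

theory Submission
  imports Defs
begin

lemma fall_Suc: "fall x (Suc k) = fall x k * (x - real k)"
  by (simp add: fall_def)

lemma fall_poch: "fall x k = (-1) ^ k * pochhammer (-x) k"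
  by (induction k) (simp_all add: fall_def pochhammer_rec' algebra_simps)

lemma fall_nat_gt: "j > k \<Longrightarrow> fall (real k) j = 0"
  unfolding fall_poch by (simp add: pochhammer_of_nat_eq_0_iff)

lemma fall_nat_eq: "fall (real k) k = fact k"
  unfolding fall_poch pochhammer_minus by (simp add: pochhammer_fact)

lemma fall_unique_aux:
  assumes "\<forall>x. (\<Sum>k\<le>n. e k * fall x k) = 0"
  shows "\<forall>k\<le>n. e k = 0"
proof -
  have "k \<le> n \<longrightarrow> e k = 0" for k
  proof (induction k rule: less_induct)
    case (less k)
    show ?case
    proof
      assume kn: "k \<le> n"
      have "(\<Sum>j\<le>n. e j * fall (real k) j) = (\<Sum>j\<in>{k}. e j * fall (real k) j)"
        apply (rule sum.mono_neutral_right)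
        using kn less.IH by (auto simp: fall_nat_gt) (metis linorder_neqE_nat fall_nat_gt mult_zero_right)
      hence "e k * fact k = 0" using assms fall_nat_eq by simp
      thus "e k = 0" by simp
    qed
  qed
  thus ?thesis by blast
qed

fun st :: "real \<Rightarrow> nat \<Rightarrow> nat \<Rightarrow> real" where
  "st lam 0 k = (if k = 0 then 1 else 0)"
| "st lam (Suc n) 0 = (- real n * lam) * st lam n 0"
| "st lam (Suc n) (Suc k) = st lam n k + (real (Suc k) - real n * lam) * st lam n (Suc k)"

lemma st_zero: "k > n \<Longrightarrow> st lam n k = 0"
proof (induction n arbitrary: k)
  case 0 then show ?case by simp
next
  case (Suc n)
  then obtain k' where "k = Suc k'" by (cases k) auto
  with Suc show ?case by simp
qed

lemma st_expand: "deg_fall lam x n = (\<Sum>k\<le>n. st lam n k * fall x k)"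
proof (induction n)
  case 0 then show ?case by (simp add: deg_fall_def fall_def)
next
  case (Suc n)
  have "deg_fall lam x (Suc n) = deg_fall lam x n * (x - real n * lam)"
    by (simp add: deg_fall_def)
  also have "\<dots> = (\<Sum>k\<le>n. st lam n k * fall x (Suc k)) + (\<Sum>k\<le>n. (real k - real n * lam) * st lam n k * fall x k)"
    unfolding Suc sum_distrib_right sum.distrib[symmetric] fall_Suc
    by (rule sum.cong) (auto simp: algebra_simps)
  also have "(\<Sum>k\<le>n. (real k - real n * lam) * st lam n k * fall x k) = (\<Sum>k\<le>Suc n. (real k - real n * lam) * st lam n k * fall x k)"
    by (simp add: st_zero)
  also have "\<dots> = (- real n * lam) * st lam n 0 + (\<Sum>k\<le>n. (real (Suc k) - real n * lam) * st lam n (Suc k) * fall x (Suc k))"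
    by (subst sum.atMost_Suc_shift) (simp add: fall_def)
  finally have "deg_fall lam x (Suc n) = (- real n * lam) * st lam n 0 + (\<Sum>k\<le>n. st lam (Suc n) (Suc k) * fall x (Suc k))"
    by (simp add: sum.distrib[symmetric] algebra_simps)
  also have "\<dots> = (\<Sum>k\<le>Suc n. st lam (Suc n) k * fall x k)"
    by (subst sum.atMost_Suc_shift) (simp add: fall_def)
  finally show ?case .
qed

lemma stirling_eq: "deg_stirling2 lam n = st lam n"
  unfolding deg_stirling2_def
proof (rule the_equality)
  show "(\<forall>k>n. st lam n k = 0) \<and> (\<forall>x. deg_fall lam x n = (\<Sum>k\<le>n. st lam n k * fall x k))"
    using st_zero st_expand by blast
next
  fix c assume c: "(\<forall>k>n. c k = 0) \<and> (\<forall>x. deg_fall lam x n = (\<Sum>k\<le>n. c k * fall x k))"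
  have "\<forall>x. (\<Sum>k\<le>n. (c k - st lam n k) * fall x k) = 0"
    using c st_expand[of lam _ n] by (simp add: left_diff_distrib sum_subtractf)
  from fall_unique_aux[OF this] have "\<forall>k\<le>n. c k = st lam n k" by simp
  with c st_zero show "c = st lam n" by (metis not_le ext)
qed


definition G :: "real \<Rightarrow> nat \<Rightarrow> real" where
  "G a n = pochhammer a n / fact n"

lemma harm_step_alg:
  fixes P f m lam :: real
  assumes "lam \<noteq> 0" "f \<noteq> 0" "m \<ge> 0"
  shows "(1 - P / f) / lam + P / ((m + 1) * f) = (1 - (1 - lam + m) * P / ((m + 1) * f)) / lam"
proof -
  have m: "m + 1 \<noteq> 0" using assms by simp
  have "(1 - P / f) / lam + P / ((m + 1) * f) = ((m+1)*f - (m+1)*P + lam * P) / (lam * ((m + 1) * f))"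
    using assms m by (simp add: divide_simps) (simp add: algebra_simps)
  also have "\<dots> = (1 - (1 - lam + m) * P / ((m + 1) * f)) / lam"
    using assms m by (simp add: divide_simps) (simp add: algebra_simps)
  finally show ?thesis .
qed

lemma harm_closed:
  assumes "lam \<noteq> 0"
  shows "deg_harm lam k = (1 - G (1 - lam) k) / lam"
proof (induction k)
  case 0 then show ?case by (simp add: deg_harm_def G_def)
next
  case (Suc k)
  define P where "P = pochhammer (1 - lam) k"
  define F where "F = (fact (Suc k) :: real)"
  have F: "F = (real k + 1) * fact k" unfolding F_def by (simp add: algebra_simps)
  have s: "(-1::real) ^ Suc k * (-1) ^ k = -1"
    by (simp add: power_mult_distrib[symmetric])
  have "deg_harm lam (Suc k) = deg_harm lam k + (1 / lam) * (lam gchoose Suc k) * (-1) ^ k"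
    by (simp add: deg_harm_def)
  also have "(lam gchoose Suc k) = (-1) ^ Suc k * ((-lam) * P) / F"
    unfolding gbinomial_pochhammer pochhammer_rec P_def F_def by (simp add: add.commute)
  also have "(1 / lam) * ((-1) ^ Suc k * ((-lam) * P) / F) * (-1) ^ k
      = P / F * (- ((-1::real) ^ Suc k * (-1) ^ k))"
    using assms by (simp add: field_simps)
  also have "\<dots> = P / F" unfolding s by simp
  also have "deg_harm lam k = (1 - P / fact k) / lam" using Suc by (simp add: G_def P_def)
  also have "(1 - P / fact k) / lam + P / F = (1 - (1 - lam + real k) * P / ((real k + 1) * fact k)) / lam"
    unfolding F by (rule harm_step_alg) (use assms in auto)
  also have "(1 - lam + real k) * P / ((real k + 1) * fact k) = G (1 - lam) (Suc k)"
    by (simp add: G_def pochhammer_rec' P_def algebra_simps)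
  finally show ?case .
qed

lemma hockey_alg:
  fixes P f m a :: real
  assumes "f \<noteq> 0" "m \<ge> 0"
  shows "P / f + a * P / ((m + 1) * f) = (a + 1 + m) * P / ((m + 1) * f)"
proof -
  have m: "m + 1 \<noteq> 0" using assms by simp
  show ?thesis using assms m by (simp add: divide_simps) (simp add: algebra_simps)
qed

lemma hockey: "(\<Sum>k\<le>n. G a k) = G (a + 1) n"
proof (induction n)
  case 0 then show ?case by (simp add: G_def)
next
  case (Suc n)
  define P where "P = pochhammer (a + 1) n"
  have ff: "(fact (Suc n) :: real) = (real n + 1) * fact n" by (simp add: algebra_simps)
  have 1: "G a (Suc n) = a * P / ((real n + 1) * fact n)"
    unfolding G_def ff by (simp add: pochhammer_rec P_def)
  have 2: "G (a + 1) (Suc n) = (a + 1 + real n) * P / ((real n + 1) * fact n)"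
    unfolding G_def ff by (simp add: pochhammer_rec' P_def)
  have 3: "G (a + 1) n = P / fact n" by (simp add: G_def P_def)
  have "(\<Sum>k\<le>Suc n. G a k) = P / fact n + a * P / ((real n + 1) * fact n)"
    using Suc 1 3 by simp
  also have "\<dots> = (a + 1 + real n) * P / ((real n + 1) * fact n)"
    by (rule hockey_alg) auto
  finally show ?case using 2 by simp
qed

lemma sum_1_atMost: "f 0 = (0::real) \<Longrightarrow> (\<Sum>k=1..n. f k) = (\<Sum>k\<le>(n::nat). f k)"
  by (induction n) auto

lemma hyper_one: "deg_hyperharm lam 1 n = deg_harm lam n"
  using deg_hyperharm.simps(2)[of lam n] by (simp add: One_nat_def)


lemma hyper_closed:
  assumes "lam \<noteq> 0"
  shows "deg_hyperharm lam (Suc r) n = (G (real (Suc r)) n - G (real (Suc r) - lam) n) / lam"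
proof (induction r arbitrary: n)
  case 0 then show ?case using harm_closed[OF assms] by (simp add: G_def pochhammer_fact[symmetric])
next
  case (Suc r)
  have "deg_hyperharm lam (Suc (Suc r)) n = (\<Sum>k=1..n. (G (real (Suc r)) k - G (real (Suc r) - lam) k) / lam)"
    using Suc by simp
  also have "\<dots> = (\<Sum>k\<le>n. (G (real (Suc r)) k - G (real (Suc r) - lam) k) / lam)"
    by (rule sum_1_atMost) (simp add: G_def)
  also have "\<dots> = ((\<Sum>k\<le>n. G (real (Suc r)) k) - (\<Sum>k\<le>n. G (real (Suc r) - lam) k)) / lam"
    by (subst sum_subtractf[symmetric]) (simp add: sum_divide_distrib)
  also have "\<dots> = (G (real (Suc (Suc r))) n - G (real (Suc (Suc r)) - lam) n) / lam"
  proof -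
    have e1: "real (Suc r) + 1 = real (Suc (Suc r))" by simp
    have e2: "real (Suc r) - lam + 1 = real (Suc (Suc r)) - lam" by simp
    show ?thesis by (simp only: hockey e1 e2)
  qed
  finally show ?case .
qed

lemma deg_fall_neg: "deg_fall lam (-y) n = (-1) ^ n * deg_rise lam y n"
  by (induction n) (simp_all add: deg_fall_def deg_rise_def algebra_simps)

lemma key: "(\<Sum>k\<le>n. st lam n k * ((-1) ^ k * pochhammer y k)) = (-1) ^ n * deg_rise lam y n"
  using st_expand[of lam "-y" n] by (simp add: deg_fall_neg fall_poch)

lemma rise_diff:
  "deg_rise lam y (Suc m) - deg_rise lam (y - lam) (Suc m) = real (Suc m) * lam * deg_rise lam y m"
proof -
  have a: "deg_rise lam y (Suc m) = deg_rise lam y m * (y + real m * lam)"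
    by (simp add: deg_rise_def)
  have b: "deg_rise lam (y - lam) (Suc m) = (y - lam) * deg_rise lam y m"
    unfolding deg_rise_def prod.lessThan_Suc_shift by (simp add: algebra_simps)
  show ?thesis unfolding a b by (simp add: algebra_simps)
qed

lemma hyper_zero: "deg_hyperharm lam r 0 = 0"
proof (cases r)
  case (Suc r') then show ?thesis by (cases r') (simp_all add: deg_harm_def)
qed simp

lemma part1:
  assumes "lam \<noteq> 0" and "n \<ge> 1" and "r \<ge> 1"
  shows "(\<Sum>k=1..n. (-1) ^ k * deg_hyperharm lam r k * fact k * deg_stirling2 lam n k)
           = (-1) ^ n * deg_rise lam (real r) (n - 1) * real n"
proof -
  obtain r' where r: "r = Suc r'" using assms(3) by (cases r) auto
  obtain m where m: "n = Suc m" using assms(2) by (cases n) auto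
  have "(\<Sum>k=1..n. (-1) ^ k * deg_hyperharm lam r k * fact k * deg_stirling2 lam n k)
      = (\<Sum>k\<le>n. (-1) ^ k * deg_hyperharm lam r k * fact k * deg_stirling2 lam n k)"
    by (rule sum_1_atMost) (simp add: hyper_zero)
  also have "\<dots> = (\<Sum>k\<le>n. (st lam n k * ((-1) ^ k * pochhammer (real r) k)
        - st lam n k * ((-1) ^ k * pochhammer (real r - lam) k)) / lam)"
  proof (rule sum.cong)
    fix k assume "k \<in> {..n}"
    have hk: "deg_hyperharm lam r k * fact k = (pochhammer (real r) k - pochhammer (real r - lam) k) / lam"
    proof -
      have fk: "(fact k :: real) \<noteq> 0" by simp
      have "deg_hyperharm lam r k * fact k = ((pochhammer (real r) k / fact k - pochhammer (real r - lam) k / fact k) * fact k) / lam"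
        using hyper_closed[OF assms(1), of r' k] unfolding r[symmetric] G_def by simp
      also have "(pochhammer (real r) k / fact k - pochhammer (real r - lam) k / fact k) * fact k
          = pochhammer (real r) k - pochhammer (real r - lam) k"
        using fk by (simp add: left_diff_distrib)
      finally show ?thesis .
    qed
    have "(-1) ^ k * deg_hyperharm lam r k * fact k * deg_stirling2 lam n k
        = (-1) ^ k * (deg_hyperharm lam r k * fact k) * st lam n k" by (simp add: stirling_eq)
    also have "\<dots> = (-1) ^ k * ((pochhammer (real r) k - pochhammer (real r - lam) k) / lam) * st lam n k"
      unfolding hk ..
    finally show "(-1) ^ k * deg_hyperharm lam r k * fact k * deg_stirling2 lam n k
       = (st lam n k * ((-1) ^ k * pochhammer (real r) k)
        - st lam n k * ((-1) ^ k * pochhammer (real r - lam) k)) / lam"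
      by (simp add: algebra_simps diff_divide_distrib)
  qed simp
  also have "\<dots> = ((-1) ^ n * deg_rise lam (real r) n - (-1) ^ n * deg_rise lam (real r - lam) n) / lam"
    by (simp add: sum_divide_distrib[symmetric] sum_subtractf key)
  also have "\<dots> = (-1) ^ n * deg_rise lam (real r) (n - 1) * real n"
  proof -
    have "(-1::real) ^ n * deg_rise lam (real r) n - (-1) ^ n * deg_rise lam (real r - lam) n
        = (-1) ^ n * (deg_rise lam (real r) n - deg_rise lam (real r - lam) n)"
      by (simp only: right_diff_distrib)
    also have "\<dots> = (-1) ^ n * (real n * lam * deg_rise lam (real r) (n - 1))"
      unfolding m rise_diff by simp
    finally show ?thesis using assms(1) by simp
  qed
  finally show ?thesis .
qed

theorem theorem2:
  fixes lam :: real and n r :: nat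
  assumes "lam \<noteq> 0" and "n \<ge> 1" and "r \<ge> 1"
  shows "(\<Sum>k=1..n. (-1) ^ k * deg_hyperharm lam r k * fact k * deg_stirling2 lam n k)
           = (-1) ^ n * deg_rise lam (real r) (n - 1) * real n
     \<and> (deg_rise lam 1 (n - 1) \<noteq> 0 \<longrightarrow>
         (1 / deg_rise lam 1 (n - 1)) *
           (\<Sum>k=1..n. (-1) ^ (n - k) * deg_harm lam k * fact k * deg_stirling2 lam n k)
           = real n)"
proof (intro conjI impI)
  show "(\<Sum>k=1..n. (-1) ^ k * deg_hyperharm lam r k * fact k * deg_stirling2 lam n k)
           = (-1) ^ n * deg_rise lam (real r) (n - 1) * real n"
    using part1 assms by blast
next
  assume nz: "deg_rise lam 1 (n - 1) \<noteq> 0"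
  have p: "(\<Sum>k=1..n. (-1) ^ k * deg_harm lam k * fact k * deg_stirling2 lam n k)
           = (-1) ^ n * deg_rise lam 1 (n - 1) * real n"
    proof -
    note X = part1[of lam n 1, unfolded hyper_one of_nat_1]
    show ?thesis by (rule X[OF assms(1,2) order_refl])
  qed
  have "(\<Sum>k=1..n. (-1) ^ (n - k) * deg_harm lam k * fact k * deg_stirling2 lam n k)
      = (\<Sum>k=1..n. (-1) ^ n * ((-1) ^ k * deg_harm lam k * fact k * deg_stirling2 lam n k))"
  proof (rule sum.cong)
    fix k assume "k \<in> {1..n}"
    hence "n = (n - k) + k" by simp
    hence "(-1::real) ^ n = (-1) ^ (n - k) * (-1) ^ k" by (metis power_add)
    hence "(-1::real) ^ n * (-1) ^ k = (-1) ^ (n - k) * ((-1) ^ k * (-1) ^ k)" by simp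
    also have "(-1::real) ^ k * (-1) ^ k = 1" by (simp add: power_mult_distrib[symmetric])
    finally have "(-1::real) ^ (n - k) = (-1) ^ n * (-1) ^ k" by simp
    thus "(-1) ^ (n - k) * deg_harm lam k * fact k * deg_stirling2 lam n k
      = (-1) ^ n * ((-1) ^ k * deg_harm lam k * fact k * deg_stirling2 lam n k)" by simp
  qed simp
  also have "\<dots> = (-1) ^ n * ((-1) ^ n * deg_rise lam 1 (n - 1) * real n)"
    by (simp only: sum_distrib_left[symmetric] p)
  also have "\<dots> = deg_rise lam 1 (n - 1) * real n"
    by (simp add: power_mult_distrib[symmetric])
  finally show "(1 / deg_rise lam 1 (n - 1)) *
           (\<Sum>k=1..n. (-1) ^ (n - k) * deg_harm lam k * fact k * deg_stirling2 lam n k)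
           = real n" using nz by simp
qed

end
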